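(* Assume $d_0\delta>2$ and let $\varepsilon_0=\frac{d_0}{2}-\frac1\delta>0$ and $t=\frac{d_0}{2}$. Let $G=(L\cup R,E)$ be a $(c,d,\alpha,\delta)$-bipartite expander with $L=[n]$, $C_0\subseteq\mathbb{F}_2^d$ a linear code of minimum distance $d_0$, $x\in\mathbb{F}_2^n$ and $y\in T(G,C_0)$ with $d_H(x,y)\le\alpha n$. Let $x'=\mathsf{RandFlip}(x)$. Then $\mathbb{E}[d_H(x',y)]\le\left(1-\frac{\varepsilon_0\delta}{t}\right)d_H(x,y)$.
   Context: Binary linear codes, Hamming distance $d_H$. A bipartite graph $G=(L\cup R,E)$ is $(c,d)$-regular if left degrees are $c$ and right degrees $d$; $N(S)$ is the neighborhood of $S$. A $(c,d,\alpha,\delta)$-bipartite expander ($c,d$ positive integers, $\alpha,\delta\in(0,1]$) is a $(c,d)$-regular bipartite graph with $|N(S)|\ge\delta c|S|$ for every $S\subseteq L$, $|S|\le\alpha|L|$. Tanner code: $L=[n]$, for each $v\in R$ a fixed ordering of $N(v)$ defines $x_{N(v)}\in\mathbb{F}_2^d$, and $T(G,C_0)=\{x: x_{N(v)}\in C_0\ \forall v\in R\}$. For $z\in\mathbb{F}_2^d$, $\mathsf{Decode}(z)$ is the codeword of $C_0$ closest to $z$, ties broken lexicographically. $\mathsf{RandFlip}(x)$: set $t=d_0/2$ and $p_1=\dots=p_n=0$; for each $v\in R$, let $w_v=\mathsf{Decode}(x_{N(v)})$; if $1\le d_H(w_v,x_{N(v)})<t$, let $i$ be the smallest element of $N(v)$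 at which $w_v$ and $x_{N(v)}$ differ and increase $p_i$ by $\frac{t-d_H(w_v,x_{N(v)})}{ct}$. Then flip each $x_i$ independently with probability $p_i$ and return the resulting word. *)

theory Defs
  imports "HOL-Probability.Probability"
begin

(* Hamming distance of two words of F_2^n, coordinates 0..<n (the paper's [n]) *)
definition hamming :: "nat \<Rightarrow> (nat \<Rightarrow> bool) \<Rightarrow> (nat \<Rightarrow> bool) \<Rightarrow> nat" where
  "hamming n x y = card {i\<in>{0..<n}. x i \<noteq> y i}"

definition hamming_list :: "bool list \<Rightarrow> bool list \<Rightarrow> nat" where
  "hamming_list u w = card {k. k < length u \<and> k < length w \<and> u ! k \<noteq> w ! k}"

definition lex_less :: "bool list \<Rightarrow> bool list \<Rightarrow> bool" where
  "lex_less w u \<longleftrightarrow> (\<exists>k < length w. k < length u \<and> take k w = take k u \<and> \<not> w ! k \<and> u ! k)"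

definition linear_code :: "nat \<Rightarrow> bool list set \<Rightarrow> bool" where
  "linear_code d C0 \<longleftrightarrow> (\<forall>w\<in>C0. length w = d) \<and> replicate d False \<in> C0 \<and>
     (\<forall>u\<in>C0. \<forall>w\<in>C0. map2 (\<noteq>) u w \<in> C0)"

definition min_distance :: "bool list set \<Rightarrow> nat \<Rightarrow> bool" where
  "min_distance C0 d0 \<longleftrightarrow> (\<forall>u\<in>C0. \<forall>w\<in>C0. u \<noteq> w \<longrightarrow> d0 \<le> hamming_list u w) \<and>
     (\<exists>u\<in>C0. \<exists>w\<in>C0. u \<noteq> w \<and> hamming_list u w = d0)"

definition decode :: "bool list set \<Rightarrow> bool list \<Rightarrow> bool list" where
  "decode C0 z = (THE w. w \<in> C0 \<and> (\<forall>u\<in>C0. hamming_list w z \<le> hamming_list u z) \<and>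
      (\<forall>u\<in>C0. u \<noteq> w \<and> hamming_list u z = hamming_list w z \<longrightarrow> lex_less w u))"

(* Bipartite graph: left vertices {0..<n}, right vertices R, each v \<in> R has the ordered
   neighbourhood nb v (a list without repetitions).  N(S) = neighbourhood of S \<subseteq> L. *)
definition nbhd :: "'r set \<Rightarrow> ('r \<Rightarrow> nat list) \<Rightarrow> nat set \<Rightarrow> 'r set" where
  "nbhd R nb S = {v\<in>R. \<exists>i\<in>S. i \<in> set (nb v)}"

definition biregular :: "nat \<Rightarrow> 'r set \<Rightarrow> ('r \<Rightarrow> nat list) \<Rightarrow> nat \<Rightarrow> nat \<Rightarrow> bool" where
  "biregular n R nb c d \<longleftrightarrow> finite R \<and>
     (\<forall>v\<in>R. distinct (nb v) \<and> set (nb v) \<subseteq> {0..<n} \<and> length (nb v) = d) \<and>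
     (\<forall>i\<in>{0..<n}. card {v\<in>R. i \<in> set (nb v)} = c)"

definition bipartite_expander ::
  "nat \<Rightarrow> 'r set \<Rightarrow> ('r \<Rightarrow> nat list) \<Rightarrow> nat \<Rightarrow> nat \<Rightarrow> real \<Rightarrow> real \<Rightarrow> bool" where
  "bipartite_expander n R nb c d \<alpha> \<delta> \<longleftrightarrow> 0 < c \<and> 0 < d \<and> 0 < \<alpha> \<and> \<alpha> \<le> 1 \<and> 0 < \<delta> \<and> \<delta> \<le> 1 \<and>
     biregular n R nb c d \<and>
     (\<forall>S. S \<subseteq> {0..<n} \<and> real (card S) \<le> \<alpha> * real n \<longrightarrow>
          real (card (nbhd R nb S)) \<ge> \<delta> * real c * real (card S))"

definition local_view :: "('r \<Rightarrow> nat list) \<Rightarrow> (nat \<Rightarrow> bool) \<Rightarrow> 'r \<Rightarrow> bool list" where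
  "local_view nb x v = map x (nb v)"

definition tanner_code :: "nat \<Rightarrow> 'r set \<Rightarrow> ('r \<Rightarrow> nat list) \<Rightarrow> bool list set \<Rightarrow> (nat \<Rightarrow> bool) set" where
  "tanner_code n R nb C0 = {x. (\<forall>i. i \<ge> n \<longrightarrow> \<not> x i) \<and> (\<forall>v\<in>R. local_view nb x v \<in> C0)}"

definition first_diff :: "('r \<Rightarrow> nat list) \<Rightarrow> (nat \<Rightarrow> bool) \<Rightarrow> bool list \<Rightarrow> 'r \<Rightarrow> nat" where
  "first_diff nb x w v = Min {nb v ! k | k. k < length (nb v) \<and> w ! k \<noteq> x (nb v ! k)}"

definition flip_prob ::
  "'r set \<Rightarrow> ('r \<Rightarrow> nat list) \<Rightarrow> nat \<Rightarrow> bool list set \<Rightarrow> nat \<Rightarrow> (nat \<Rightarrow> bool) \<Rightarrow> nat \<Rightarrow> real" where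
  "flip_prob R nb c C0 d0 x i =
     (let t = real d0 / 2 in
      \<Sum>v\<in>{v\<in>R. let w = decode C0 (local_view nb x v); e = hamming_list w (local_view nb x v)
                 in 1 \<le> e \<and> real e < t \<and> first_diff nb x w v = i}.
        (t - real (hamming_list (decode C0 (local_view nb x v)) (local_view nb x v))) / (real c * t))"

definition rand_flip ::
  "nat \<Rightarrow> 'r set \<Rightarrow> ('r \<Rightarrow> nat list) \<Rightarrow> nat \<Rightarrow> bool list set \<Rightarrow> nat \<Rightarrow> (nat \<Rightarrow> bool) \<Rightarrow> (nat \<Rightarrow> bool) pmf" where
  "rand_flip n R nb c C0 d0 x =
     map_pmf (\<lambda>f i. x i \<noteq> f i)
       (Pi_pmf {0..<n} False (\<lambda>i. bernoulli_pmf (flip_prob R nb c C0 d0 x i)))"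

end

theory Submission imports Defs begin

lemma lex_irrefl: "\<not> lex_less w w" by (auto simp: lex_less_def)

lemma lex_trans: assumes "lex_less a b" "lex_less b c" shows "lex_less a c"
proof -
  obtain k1 where k1: "k1 < length a" "k1 < length b" "take k1 a = take k1 b" "\<not> a ! k1" "b ! k1"
    using assms(1) by (auto simp: lex_less_def)
  obtain k2 where k2: "k2 < length b" "k2 < length c" "take k2 b = take k2 c" "\<not> b ! k2" "c ! k2"
    using assms(2) by (auto simp: lex_less_def)
  consider "k1 < k2" | "k1 = k2" | "k2 < k1" by linarith
  then show ?thesis
  proof cases
    case 1
    have "take k1 (take k2 b) = take k1 (take k2 c)" using k2(3) by simp
    then have "take k1 b = take k1 c" using 1 by (simp add: min_def)
    moreover have "take k2 b ! k1 = take k2 c ! k1" using k2(3) by simp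
    then have "c ! k1 = b ! k1" using 1 by simp
    ultimately show ?thesis using k1 k2 1 unfolding lex_less_def
      by (intro exI[of _ k1]) auto
  next
    case 2 then show ?thesis using k1 k2 by auto
  next
    case 3
    have "take k2 (take k1 a) = take k2 (take k1 b)" using k1(3) by simp
    then have "take k2 a = take k2 b" using 3 by (simp add: min_def)
    moreover have "take k1 a ! k2 = take k1 b ! k2" using k1(3) by simp
    then have "a ! k2 = b ! k2" using 3 by simp
    ultimately show ?thesis using k1 k2 3 unfolding lex_less_def
      by (intro exI[of _ k2]) auto
  qed
qed

lemma lex_total: assumes "length a = length b" "a \<noteq> b" shows "lex_less a b \<or> lex_less b a"
proof -
  have ex: "\<exists>k. k < length a \<and> a ! k \<noteq> b ! k" using assms nth_equalityI by blast
  define k where "k = (LEAST k. k < length a \<and> a ! k \<noteq> b ! k)"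
  have kk: "k < length a \<and> a ! k \<noteq> b ! k" unfolding k_def by (rule LeastI_ex[OF ex])
  have lt: "a ! j = b ! j" if "j < k" for j
  proof (rule ccontr)
    assume "a ! j \<noteq> b ! j"
    then have "k \<le> j" unfolding k_def using that kk by (intro Least_le) simp
    then show False using that by simp
  qed
  have "take k a = take k b"
  proof (rule nth_equalityI)
    show "length (take k a) = length (take k b)" using assms(1) by simp
    fix j assume "j < length (take k a)"
    then show "take k a ! j = take k b ! j" using lt by simp
  qed
  then show ?thesis using kk assms(1) unfolding lex_less_def
    by (cases "a ! k") (auto intro!: exI[of _ k])
qed

lemma decode_props:
  assumes "linear_code d C0"
  shows "decode C0 z \<in> C0 \<and> (\<forall>u\<in>C0. hamming_list (decode C0 z) z \<le> hamming_list u z)"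
proof -
  have L: "(\<forall>w\<in>C0. length w = d) \<and> replicate d False \<in> C0 \<and> (\<forall>u\<in>C0. \<forall>w\<in>C0. map2 (\<noteq>) u w \<in> C0)"
    using assms unfolding linear_code_def .
  have len: "\<And>w. w \<in> C0 \<Longrightarrow> length w = d" using L by blast
  have ne: "replicate d False \<in> C0" using L by blast
  have sub: "C0 \<subseteq> {xs. set xs \<subseteq> (UNIV::bool set) \<and> length xs = d}" using len by blast
  have fin: "finite C0"
    by (rule finite_subset[OF sub finite_lists_length_eq]) simp
  obtain m where m: "m \<in> C0" "\<forall>u. u \<in> C0 \<longrightarrow> hamming_list m z \<le> hamming_list u z"
    using ex_has_least_nat[of "\<lambda>w. w \<in> C0", OF ne, of "\<lambda>w. hamming_list w z"] by blast
  define M where "M = {w\<in>C0. \<forall>u\<in>C0. hamming_list w z \<le> hamming_list u z}"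
  define r where "r = {(a,b). a \<in> M \<and> b \<in> M \<and> lex_less a b}"
  have "r \<subseteq> C0 \<times> C0" unfolding r_def M_def by blast
  then have finr: "finite r" using fin finite_subset by blast
  have "trans r"
  proof (rule transI)
    fix a b c assume "(a,b) \<in> r" "(b,c) \<in> r"
    then show "(a,c) \<in> r" unfolding r_def using lex_trans[of a b c] by simp
  qed
  then have "r\<^sup>+ = r" by (rule trancl_id)
  then have "acyclic r" unfolding acyclic_def r_def using lex_irrefl by simp
  then have "wf r" using finr by (rule finite_acyclic_wf[rotated])
  moreover have "m \<in> M" using m unfolding M_def by auto
  ultimately obtain w0 where w0: "w0 \<in> M" "\<And>u. (u, w0) \<in> r \<Longrightarrow> u \<notin> M"
    using wfE_min[OF \<open>wf r\<close> \<open>m \<in> M\<close>] by blast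
  have P: "w0 \<in> C0 \<and> (\<forall>u\<in>C0. hamming_list w0 z \<le> hamming_list u z) \<and>
      (\<forall>u\<in>C0. u \<noteq> w0 \<and> hamming_list u z = hamming_list w0 z \<longrightarrow> lex_less w0 u)"
  proof -
    have w0C: "w0 \<in> C0" and w0m: "\<forall>u\<in>C0. hamming_list w0 z \<le> hamming_list u z"
      using w0(1) unfolding M_def by blast+
    have "lex_less w0 u" if u: "u \<in> C0" "u \<noteq> w0" "hamming_list u z = hamming_list w0 z" for u
    proof -
      have "\<forall>u'\<in>C0. hamming_list u z \<le> hamming_list u' z" using w0m u(3) by simp
      then have uM: "u \<in> M" using u(1) unfolding M_def by blast
      have "\<not> lex_less u w0"
      proof
        assume "lex_less u w0"
        then have "(u, w0) \<in> r" unfolding r_def using uM w0(1) by blast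
        then show False using w0(2) uM by blast
      qed
      moreover have "length u = length w0" using len u(1) w0C by simp
      ultimately show ?thesis using lex_total[of u w0] u(2) by blast
    qed
    then show ?thesis using w0C w0m by blast
  qed
  have "decode C0 z = w0" unfolding decode_def
  proof (rule the_equality)
    show "w0 \<in> C0 \<and> (\<forall>u\<in>C0. hamming_list w0 z \<le> hamming_list u z) \<and>
      (\<forall>u\<in>C0. u \<noteq> w0 \<and> hamming_list u z = hamming_list w0 z \<longrightarrow> lex_less w0 u)" by (rule P)
  next
    fix w assume H: "w \<in> C0 \<and> (\<forall>u\<in>C0. hamming_list w z \<le> hamming_list u z) \<and>
      (\<forall>u\<in>C0. u \<noteq> w \<and> hamming_list u z = hamming_list w z \<longrightarrow> lex_less w u)"
    show "w = w0"
    proof (rule ccontr)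
      assume "w \<noteq> w0"
      moreover have "hamming_list w z = hamming_list w0 z" using H P by (meson le_antisym)
      ultimately have "lex_less w w0" "lex_less w0 w" using H P by auto
      then show False using lex_trans[of w w0 w] lex_irrefl[of w] by simp
    qed
  qed
  then show ?thesis using P by simp
qed


lemma hl_sym: "hamming_list a b = hamming_list b a"
proof -
  have "{k. k < length a \<and> k < length b \<and> a!k \<noteq> b!k} = {k. k < length b \<and> k < length a \<and> b!k \<noteq> a!k}"
    by blast
  then show ?thesis unfolding hamming_list_def by simp
qed

lemma hl_tri: assumes "length a = length b" "length b = length c"
  shows "hamming_list a c \<le> hamming_list a b + hamming_list b c"
proof -
  let ?A = "{k. k < length a \<and> k < length b \<and> a!k \<noteq> b!k}"
  let ?B = "{k. k < length b \<and> k < length c \<and> b!k \<noteq> c!k}"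
  have sub: "{k. k < length a \<and> k < length c \<and> a!k \<noteq> c!k} \<subseteq> ?A \<union> ?B" using assms by auto
  have fA: "finite ?A" by (rule finite_subset[of _ "{..<length a}"]) auto
  have fB: "finite ?B" by (rule finite_subset[of _ "{..<length b}"]) auto
  have "hamming_list a c \<le> card (?A \<union> ?B)" unfolding hamming_list_def
    using sub fA fB by (intro card_mono) auto
  also have "\<dots> \<le> card ?A + card ?B" by (rule card_Un_le)
  finally show ?thesis unfolding hamming_list_def .
qed

lemma hl_pos: assumes "1 \<le> hamming_list a b" shows "\<exists>k<length a. k < length b \<and> a!k \<noteq> b!k"
proof (rule ccontr)
  assume "\<not> ?thesis"
  then have "{k. k < length a \<and> k < length b \<and> a!k \<noteq> b!k} = {}" by blast
  then show False using assms unfolding hamming_list_def by (simp only: card.empty)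
qed

lemma card_nth_distinct: assumes "distinct l"
  shows "card {k. k < length l \<and> P (l ! k)} = card {i \<in> set l. P i}"
proof -
  have "{i \<in> set l. P i} = (!) l ` {k. k < length l \<and> P (l ! k)}" by (auto simp: in_set_conv_nth)
  moreover have "inj_on ((!) l) {k. k < length l \<and> P (l ! k)}"
    using assms by (auto simp: inj_on_def nth_eq_iff_index_eq)
  ultimately show ?thesis by (simp add: card_image)
qed

lemma card_filter_sum: assumes "finite I"
  shows "real (card {i\<in>I. P i}) = (\<Sum>i\<in>I. if P i then 1 else 0)"
  by (simp add: sum.inter_filter[symmetric, OF assms])

lemma double_count:
  fixes nb :: "'r \<Rightarrow> nat list"
  assumes "finite R" "finite S"
  shows "(\<Sum>v\<in>R. real (card (S \<inter> set (nb v)))) = (\<Sum>i\<in>S. real (card {v\<in>R. i \<in> set (nb v)}))"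
proof -
  have "(\<Sum>v\<in>R. real (card (S \<inter> set (nb v)))) = (\<Sum>v\<in>R. \<Sum>i\<in>S. if i \<in> set (nb v) then 1 else (0::real))"
  proof (rule sum.cong)
    fix v assume "v \<in> R"
    have "S \<inter> set (nb v) = {i\<in>S. i \<in> set (nb v)}" by blast
    then show "real (card (S \<inter> set (nb v))) = (\<Sum>i\<in>S. if i \<in> set (nb v) then 1 else (0::real))"
      using card_filter_sum[OF assms(2)] by simp
  qed simp
  also have "\<dots> = (\<Sum>i\<in>S. \<Sum>v\<in>R. if i \<in> set (nb v) then 1 else (0::real))" by (rule sum.swap)
  also have "\<dots> = (\<Sum>i\<in>S. real (card {v\<in>R. i \<in> set (nb v)}))"
    using card_filter_sum[OF assms(1)] by simp
  finally show ?thesis .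
qed

lemma sum_fiber:
  fixes a :: "'r \<Rightarrow> real" and g :: "nat \<Rightarrow> real"
  assumes "finite R" "finite I" "\<And>v. v \<in> R \<Longrightarrow> Q v \<Longrightarrow> f v \<in> I"
  shows "(\<Sum>i\<in>I. g i * (\<Sum>v\<in>{v\<in>R. Q v \<and> f v = i}. a v)) = (\<Sum>v\<in>R. if Q v then g (f v) * a v else 0)"
proof -
  have "(\<Sum>i\<in>I. g i * (\<Sum>v\<in>{v\<in>R. Q v \<and> f v = i}. a v)) = (\<Sum>i\<in>I. \<Sum>v\<in>R. if Q v \<and> f v = i then g i * a v else 0)"
    by (auto simp: sum.inter_filter[OF assms(1)] sum_distrib_left intro!: sum.cong)
  also have "\<dots> = (\<Sum>v\<in>R. \<Sum>i\<in>I. if Q v \<and> f v = i then g i * a v else 0)" by (rule sum.swap)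
  also have "\<dots> = (\<Sum>v\<in>R. if Q v then g (f v) * a v else 0)"
  proof (rule sum.cong)
    fix v assume v: "v \<in> R"
    show "(\<Sum>i\<in>I. if Q v \<and> f v = i then g i * a v else 0) = (if Q v then g (f v) * a v else 0)"
    proof (cases "Q v")
      case True
      then show ?thesis using assms(2) assms(3)[OF v] by (simp add: sum.delta)
    qed simp
  qed simp
  finally show ?thesis .
qed

lemma exp_randflip:
  fixes p :: "nat \<Rightarrow> real" and x y :: "nat \<Rightarrow> bool"
  assumes "\<And>i. 0 \<le> p i" "\<And>i. p i \<le> 1"
  shows "measure_pmf.expectation (map_pmf (\<lambda>f i. x i \<noteq> f i) (Pi_pmf {0..<n} False (\<lambda>i. bernoulli_pmf (p i))))
           (\<lambda>x'. real (hamming n x' y))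
     = (\<Sum>i\<in>{0..<n}. if x i \<noteq> y i then 1 - p i else p i)"
proof -
  define PP where "PP = Pi_pmf {0..<n} False (\<lambda>i. bernoulli_pmf (p i))"
  define h where "h i b = (if (x i \<noteq> b) \<noteq> y i then 1 else (0::real))" for i b
  have ham: "real (hamming n (\<lambda>i. x i \<noteq> f i) y) = (\<Sum>i\<in>{0..<n}. h i (f i))" for f
    unfolding hamming_def h_def by (rule card_filter_sum) simp
  have int: "integrable (measure_pmf PP) (\<lambda>f. h i (f i))" for i
    by (rule measure_pmf.integrable_const_bound[where B=1]) (auto simp: h_def)
  have comp: "measure_pmf.expectation PP (\<lambda>f. h i (f i)) = h i True * p i + h i False * (1 - p i)"
    if "i \<in> {0..<n}" for i
  proof -
    have "measure_pmf.expectation PP (\<lambda>f. h i (f i)) = measure_pmf.expectation (map_pmf (\<lambda>f. f i) PP) (h i)"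
      by simp
    also have "map_pmf (\<lambda>f. f i) PP = bernoulli_pmf (p i)" unfolding PP_def
      using Pi_pmf_component[of "{0..<n}" i False] that by simp
    finally show ?thesis using assms by simp
  qed
  have "measure_pmf.expectation (map_pmf (\<lambda>f i. x i \<noteq> f i) PP) (\<lambda>x'. real (hamming n x' y))
      = measure_pmf.expectation PP (\<lambda>f. \<Sum>i\<in>{0..<n}. h i (f i))"
    using ham by simp
  also have "\<dots> = (\<Sum>i\<in>{0..<n}. measure_pmf.expectation PP (\<lambda>f. h i (f i)))"
    by (rule Bochner_Integration.integral_sum) (rule int)
  also have "\<dots> = (\<Sum>i\<in>{0..<n}. if x i \<noteq> y i then 1 - p i else p i)"
  proof (rule sum.cong[OF refl])
    fix i assume i: "i \<in> {0..<n}"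
    show "measure_pmf.expectation PP (\<lambda>f. h i (f i)) = (if x i \<noteq> y i then 1 - p i else p i)"
      unfolding comp[OF i] by (auto simp: h_def)
  qed
  finally show ?thesis unfolding PP_def .
qed


lemma fd_mem:
  assumes "1 \<le> hamming_list w (map x (nb v))" "length w = length (nb v)"
  shows "\<exists>k<length (nb v). first_diff nb x w v = nb v ! k \<and> w ! k \<noteq> x (nb v ! k)"
proof -
  define D where "D = {nb v ! k | k. k < length (nb v) \<and> w ! k \<noteq> x (nb v ! k)}"
  obtain k where k: "k < length w" "k < length (map x (nb v))" "w ! k \<noteq> map x (nb v) ! k"
    using hl_pos[OF assms(1)] by blast
  have "nb v ! k \<in> D" using k assms(2) unfolding D_def by auto
  then have ne: "D \<noteq> {}" by blast
  have "D = (\<lambda>k. nb v ! k) ` {k. k < length (nb v) \<and> w ! k \<noteq> x (nb v ! k)}" unfolding D_def by blast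
  then have fin: "finite D" by simp
  have "Min D \<in> D" using Min_in[OF fin ne] .
  then show ?thesis unfolding first_diff_def D_def[symmetric] unfolding D_def by blast
qed

theorem theorem3p2:
  fixes n c d d0 :: nat and R :: "'r set" and nb :: "'r \<Rightarrow> nat list"
    and \<alpha> \<delta> :: real and C0 :: "bool list set" and x y :: "nat \<Rightarrow> bool"
  assumes "bipartite_expander n R nb c d \<alpha> \<delta>"
    and "linear_code d C0"
    and "min_distance C0 d0"
    and "real d0 * \<delta> > 2"
    and "\<forall>i. i \<ge> n \<longrightarrow> \<not> x i"
    and "y \<in> tanner_code n R nb C0"
    and "real (hamming n x y) \<le> \<alpha> * real n"
  shows "measure_pmf.expectation (rand_flip n R nb c C0 d0 x) (\<lambda>x'. real (hamming n x' y))
           \<le> (1 - ((real d0 / 2 - 1 / \<delta>) * \<delta>) / (real d0 / 2)) * real (hamming n x y)"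
proof -
  have EX: "0 < c \<and> 0 < d \<and> 0 < \<alpha> \<and> \<alpha> \<le> 1 \<and> 0 < \<delta> \<and> \<delta> \<le> 1 \<and>
     biregular n R nb c d \<and>
     (\<forall>S. S \<subseteq> {0..<n} \<and> real (card S) \<le> \<alpha> * real n \<longrightarrow>
          real (card (nbhd R nb S)) \<ge> \<delta> * real c * real (card S))"
    using assms(1) unfolding bipartite_expander_def .
  then have c0: "0 < c" and dpos: "0 < \<delta>" and bireg: "biregular n R nb c d"
    and expand: "\<And>S. S \<subseteq> {0..<n} \<Longrightarrow> real (card S) \<le> \<alpha> * real n \<Longrightarrow>
          real (card (nbhd R nb S)) \<ge> \<delta> * real c * real (card S)"
    by blast+
  have BR: "finite R \<and> (\<forall>v\<in>R. distinct (nb v) \<and> set (nb v) \<subseteq> {0..<n} \<and> length (nb v) = d) \<and>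
     (\<forall>i\<in>{0..<n}. card {v\<in>R. i \<in> set (nb v)} = c)" using bireg unfolding biregular_def .
  then have finR: "finite R" and nbv: "\<And>v. v\<in>R \<Longrightarrow> distinct (nb v) \<and> set (nb v) \<subseteq> {0..<n} \<and> length (nb v) = d"
    and degc: "\<And>i. i\<in>{0..<n} \<Longrightarrow> card {v\<in>R. i \<in> set (nb v)} = c"
    by blast+
  have degle: "card {v\<in>R. i \<in> set (nb v)} \<le> c" for i
  proof (cases "i < n")
    case True then show ?thesis using degc by simp
  next
    case False
    then have "{v\<in>R. i \<in> set (nb v)} = {}" using nbv by fastforce
    then have "card {v\<in>R. i \<in> set (nb v)} = 0" by (simp only: card.empty)
    then show ?thesis by simp
  qed
  have LC: "(\<forall>w\<in>C0. length w = d) \<and> replicate d False \<in> C0 \<and> (\<forall>u\<in>C0. \<forall>w\<in>C0. map2 (\<noteq>) u w \<in> C0)"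
    using assms(2) unfolding linear_code_def .
  then have lenC: "\<And>w. w \<in> C0 \<Longrightarrow> length w = d" by blast
  have MD: "(\<forall>u\<in>C0. \<forall>w\<in>C0. u \<noteq> w \<longrightarrow> d0 \<le> hamming_list u w) \<and>
     (\<exists>u\<in>C0. \<exists>w\<in>C0. u \<noteq> w \<and> hamming_list u w = d0)" using assms(3) unfolding min_distance_def .
  then have md: "\<And>a b. a\<in>C0 \<Longrightarrow> b\<in>C0 \<Longrightarrow> a \<noteq> b \<Longrightarrow> d0 \<le> hamming_list a b" by blast
  have TC: "(\<forall>i. i \<ge> n \<longrightarrow> \<not> y i) \<and> (\<forall>v\<in>R. local_view nb y v \<in> C0)"
    using assms(6) unfolding tanner_code_def by simp
  then have ytan: "\<And>v. v\<in>R \<Longrightarrow> local_view nb y v \<in> C0" by blast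
  have d0pos: "0 < d0" using assms(4) by (cases "d0 = 0") auto
  define t where "t = real d0 / 2"
  have tpos: "0 < t" unfolding t_def using d0pos by simp
  have ct: "0 < real c * t" using c0 tpos by simp
  define S where "S = {i\<in>{0..<n}. x i \<noteq> y i}"
  have hamS: "hamming n x y = card S" unfolding hamming_def S_def ..
  have Ssub: "S \<subseteq> {0..<n}" unfolding S_def by blast
  have finS: "finite S" unfolding S_def by simp
  define z where "z v = local_view nb x v" for v
  define u where "u v = local_view nb y v" for v
  define w where "w v = decode C0 (z v)" for v
  define e where "e v = hamming_list (w v) (z v)" for v
  define s where "s v = hamming_list (z v) (u v)" for v
  define P where "P v = (1 \<le> e v \<and> real (e v) < t)" for v
  define fd where "fd v = first_diff nb x (w v) v" for v
  define a where "a v = (t - real (e v)) / (real c * t)" for v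
  define p where "p i = flip_prob R nb c C0 d0 x i" for i
  define g where "g i = (if i \<in> S then 1 else - 1 :: real)" for i
  define G where "G v = (if P v then g (fd v) * a v else 0)" for v
  have p_eq: "p i = (\<Sum>v\<in>{v\<in>R. P v \<and> fd v = i}. a v)" for i
    unfolding p_def flip_prob_def Let_def P_def fd_def a_def e_def w_def z_def t_def by (simp add: conj_assoc)
  have a_bd: "0 \<le> a v \<and> a v \<le> 1 / real c" if "P v" for v
  proof -
    have "0 \<le> t - real (e v)" "t - real (e v) \<le> t" using that unfolding P_def by auto
    then show ?thesis unfolding a_def using ct tpos by (auto simp: field_simps)
  qed
  have vfacts: "length (z v) = d \<and> length (u v) = d \<and> u v \<in> C0 \<and> w v \<in> C0 \<and> length (w v) = d
      \<and> e v \<le> s v \<and> (w v \<noteq> u v \<longrightarrow> d0 \<le> e v + s v) \<and> s v = card (S \<inter> set (nb v))" if vR: "v \<in> R" for v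
  proof -
    have nb: "distinct (nb v)" "set (nb v) \<subseteq> {0..<n}" "length (nb v) = d" using nbv[OF vR] by auto
    have lz: "length (z v) = d" and lu: "length (u v) = d" unfolding z_def u_def local_view_def using nb by auto
    have uC: "u v \<in> C0" unfolding u_def using ytan[OF vR] .
    have DP: "w v \<in> C0 \<and> (\<forall>u\<in>C0. hamming_list (w v) (z v) \<le> hamming_list u (z v))"
      unfolding w_def by (rule decode_props[OF assms(2)])
    then have wC: "w v \<in> C0" by blast
    have lw: "length (w v) = d" using lenC[OF wC] .
    have "hamming_list (w v) (z v) \<le> hamming_list (u v) (z v)" using DP uC by blast
    then have es: "e v \<le> s v" unfolding e_def s_def using hl_sym[of "u v" "z v"] by simp
    have far: "d0 \<le> e v + s v" if "w v \<noteq> u v"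
    proof -
      have "d0 \<le> hamming_list (w v) (u v)" using md[OF wC uC that] .
      also have "\<dots> \<le> e v + s v" unfolding e_def s_def using hl_tri[of "w v" "z v" "u v"] lw lz lu by simp
      finally show ?thesis .
    qed
    have "s v = card {k. k < length (nb v) \<and> x (nb v ! k) \<noteq> y (nb v ! k)}"
      unfolding s_def hamming_list_def z_def u_def local_view_def by (intro arg_cong[where f=card]) auto
    also have "\<dots> = card {i \<in> set (nb v). x i \<noteq> y i}" by (rule card_nth_distinct[OF nb(1)])
    also have "{i \<in> set (nb v). x i \<noteq> y i} = S \<inter> set (nb v)" unfolding S_def using nb(2) by auto
    finally show ?thesis using lz lu uC wC lw es far by blast
  qed
  have fdS: "fd v \<in> {0..<n} \<and> (w v = u v \<longrightarrow> fd v \<in> S)" if vR: "v \<in> R" and Pv: "P v" for v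
  proof -
    have nb: "set (nb v) \<subseteq> {0..<n}" "length (nb v) = d" using nbv[OF vR] by auto
    have "1 \<le> hamming_list (w v) (map x (nb v))" using Pv unfolding P_def e_def z_def local_view_def by simp
    moreover have "length (w v) = length (nb v)" using vfacts[OF vR] nb by simp
    ultimately obtain k where k: "k < length (nb v)" "fd v = nb v ! k" "w v ! k \<noteq> x (nb v ! k)"
      using fd_mem[of "w v" x nb v] unfolding fd_def by blast
    have "nb v ! k \<in> set (nb v)" by (rule nth_mem[OF k(1)])
    then have inn: "fd v \<in> {0..<n}" using k(2) nb(1) by auto
    moreover have "fd v \<in> S" if "w v = u v"
    proof -
      have "u v ! k = y (nb v ! k)" unfolding u_def local_view_def using k(1) by simp
      then have "x (fd v) \<noteq> y (fd v)" using k(2,3) that by simp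
      then show ?thesis using inn unfolding S_def by simp
    qed
    ultimately show ?thesis by blast
  qed
  have p_bd: "0 \<le> p i \<and> p i \<le> 1" for i
  proof -
    have "0 \<le> p i" unfolding p_eq using a_bd by (intro sum_nonneg) auto
    moreover have "p i \<le> real (card {v\<in>R. P v \<and> fd v = i}) * (1 / real c)"
      unfolding p_eq using a_bd by (intro sum_bounded_above) auto
    moreover have "card {v\<in>R. P v \<and> fd v = i} \<le> c"
    proof -
      have "{v\<in>R. P v \<and> fd v = i} \<subseteq> {v\<in>R. i \<in> set (nb v)}"
      proof
        fix v assume "v \<in> {v\<in>R. P v \<and> fd v = i}"
        then have vR: "v \<in> R" "P v" "fd v = i" by auto
        have "1 \<le> hamming_list (w v) (map x (nb v))" using vR(2) unfolding P_def e_def z_def local_view_def by simp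
        moreover have "length (w v) = length (nb v)" using vfacts[OF vR(1)] nbv[OF vR(1)] by simp
        ultimately obtain k where k: "k < length (nb v)" "fd v = nb v ! k"
          using fd_mem[of "w v" x nb v] unfolding fd_def by blast
        have "fd v \<in> set (nb v)" unfolding k(2) by (rule nth_mem[OF k(1)])
        then show "v \<in> {v\<in>R. i \<in> set (nb v)}" using vR by simp
      qed
      then have "card {v\<in>R. P v \<and> fd v = i} \<le> card {v\<in>R. i \<in> set (nb v)}"
        using finR by (intro card_mono) auto
      then show ?thesis using degle[of i] by simp
    qed
    then have "real (card {v\<in>R. P v \<and> fd v = i}) * (1 / real c) \<le> 1" using c0 by (simp add: field_simps)
    ultimately show ?thesis by linarith
  qed
  have claim: "G v \<ge> (t * (if 1 \<le> s v then 1 else 0) - real (s v)) / (real c * t)" if vR: "v \<in> R" for v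
  proof -
    have F: "length (z v) = d" "length (u v) = d" "u v \<in> C0" "w v \<in> C0" "length (w v) = d"
      "e v \<le> s v" "w v \<noteq> u v \<Longrightarrow> d0 \<le> e v + s v" using vfacts[OF vR] by auto
    consider (zero) "s v = 0" | (small) "1 \<le> s v" "real (s v) < t" | (big) "t \<le> real (s v)" by linarith
    then show ?thesis
    proof cases
      case zero
      then have "\<not> P v" using F(6) unfolding P_def by simp
      then show ?thesis unfolding G_def using zero by simp
    next
      case small
      have wu: "w v = u v"
      proof (rule ccontr)
        assume "w v \<noteq> u v"
        then have "real d0 \<le> real (e v) + real (s v)" using F(7) by linarith
        then show False using F(6) small unfolding t_def by linarith
      qed
      have "e v = s v" unfolding e_def s_def wu using hl_sym[of "u v" "z v"] by simp
      then have Pv: "P v" unfolding P_def using small by simp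
      have "g (fd v) = 1" using fdS[OF vR Pv] wu unfolding g_def by simp
      then have "G v = a v" unfolding G_def using Pv by simp
      then show ?thesis unfolding a_def using \<open>e v = s v\<close> small by simp
    next
      case big
      have s1: "1 \<le> s v" using big tpos by linarith
      have rhs: "(t * (if 1 \<le> s v then 1 else 0) - real (s v)) / (real c * t) = (t - real (s v)) / (real c * t)"
        using s1 by simp
      show ?thesis
      proof (cases "P v")
        case False
        then have "G v = 0" unfolding G_def by simp
        moreover have "(t - real (s v)) / (real c * t) \<le> 0" using big ct by (intro divide_nonpos_pos) auto
        ultimately show ?thesis unfolding rhs by simp
      next
        case True
        have "w v \<noteq> u v"
        proof
          assume "w v = u v"
          then have "e v = s v" unfolding e_def s_def using hl_sym[of "u v" "z v"] by simp
          then show False using True big unfolding P_def by simp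
        qed
        then have "real d0 \<le> real (e v) + real (s v)" using F(7) by linarith
        then have "t - real (s v) \<le> real (e v) - t" unfolding t_def by simp
        then have "(t - real (s v)) / (real c * t) \<le> (real (e v) - t) / (real c * t)"
          using ct by (intro divide_right_mono) auto
        also have "\<dots> = - a v" unfolding a_def minus_divide_left by simp
        also have "- a v \<le> G v"
          using a_bd[OF True] True unfolding G_def g_def by auto
        finally have "(t - real (s v)) / (real c * t) \<le> G v" .
        then show ?thesis unfolding rhs .
      qed
    qed
  qed
  define N where "N = nbhd R nb S"
  have N_eq: "N = {v\<in>R. 1 \<le> s v}"
  proof -
    have "(\<exists>i\<in>S. i \<in> set (nb v)) \<longleftrightarrow> 1 \<le> s v" if "v \<in> R" for v
    proof -
      have "s v = card (S \<inter> set (nb v))" using vfacts[OF that] by blast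
      moreover have "finite (S \<inter> set (nb v))" by simp
      ultimately have "1 \<le> s v \<longleftrightarrow> S \<inter> set (nb v) \<noteq> {}" by (simp add: Suc_le_eq card_gt_0_iff)
      then show ?thesis by blast
    qed
    then show ?thesis unfolding N_def nbhd_def by auto
  qed
  have sum_s: "(\<Sum>v\<in>R. real (s v)) = real c * real (card S)"
  proof -
    have "(\<Sum>v\<in>R. real (s v)) = (\<Sum>v\<in>R. real (card (S \<inter> set (nb v))))"
      using vfacts by (intro sum.cong) auto
    also have "\<dots> = (\<Sum>i\<in>S. real (card {v\<in>R. i \<in> set (nb v)}))" by (rule double_count[OF finR finS])
    also have "\<dots> = (\<Sum>i\<in>S. real c)" using degc Ssub by (intro sum.cong) auto
    finally show ?thesis by simp
  qed
  have sum_N: "(\<Sum>v\<in>R. (if 1 \<le> s v then 1 else 0 :: real)) = real (card N)"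
    unfolding N_eq by (rule card_filter_sum[OF finR, symmetric])
  have expN: "real (card N) \<ge> \<delta> * real c * real (card S)"
    unfolding N_def using expand[OF Ssub] assms(7) hamS by simp
  have "(\<Sum>i\<in>{0..<n}. g i * p i) = (\<Sum>v\<in>R. G v)"
    unfolding p_eq G_def by (rule sum_fiber[OF finR]) (use fdS in auto)
  also have "\<dots> \<ge> (\<Sum>v\<in>R. (t * (if 1 \<le> s v then 1 else 0) - real (s v)) / (real c * t))"
    using claim by (intro sum_mono) auto
  finally have gp1: "(\<Sum>i\<in>{0..<n}. g i * p i) \<ge> (t * real (card N) - real c * real (card S)) / (real c * t)"
    by (simp add: sum_divide_distrib[symmetric] sum_subtractf sum_distrib_left[symmetric] sum_N[simplified] sum_s)
  have "(t * real (card N) - real c * real (card S)) / (real c * t) \<ge>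
      (t * (\<delta> * real c * real (card S)) - real c * real (card S)) / (real c * t)"
    using expN ct tpos by (intro divide_right_mono) auto
  also have "(t * (\<delta> * real c * real (card S)) - real c * real (card S)) / (real c * t)
      = \<delta> * real (card S) - real (card S) / t" using c0 tpos by (simp add: field_simps)
  finally have gp: "(\<Sum>i\<in>{0..<n}. g i * p i) \<ge> \<delta> * real (card S) - real (card S) / t"
    using gp1 by linarith
  have cS: "real (card S) = (\<Sum>i\<in>{0..<n}. if x i \<noteq> y i then 1 else 0)"
    unfolding S_def by (rule card_filter_sum) simp
  have "measure_pmf.expectation (rand_flip n R nb c C0 d0 x) (\<lambda>x'. real (hamming n x' y))
      = (\<Sum>i\<in>{0..<n}. if x i \<noteq> y i then 1 - p i else p i)"
    unfolding rand_flip_def p_def[symmetric] by (rule exp_randflip) (use p_bd in auto)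
  also have "\<dots> = (\<Sum>i\<in>{0..<n}. (if x i \<noteq> y i then 1 else 0) - g i * p i)"
    unfolding g_def S_def by (intro sum.cong) auto
  also have "\<dots> = real (card S) - (\<Sum>i\<in>{0..<n}. g i * p i)"
    using cS by (simp add: sum_subtractf)
  also have "\<dots> \<le> real (card S) - (\<delta> * real (card S) - real (card S) / t)" using gp by simp
  also have "\<dots> = (1 - ((real d0 / 2 - 1 / \<delta>) * \<delta>) / (real d0 / 2)) * real (hamming n x y)"
    unfolding hamS t_def using dpos d0pos by (simp add: field_simps)
  finally show ?thesis .
qed

end
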